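(* Let $A$ be a T-brace. Then the additive group of $\zeta_n(\star,A)/\zeta(\star,A)$ is periodic for all natural numbers $n$.
   Context: A (left) brace is a set $A$ with two operations $+$ and $\cdot$ such that $(A,+)$ is an abelian group, $(A,\cdot)$ is a group, and $a(b+c)=ab+ac-a$ for all $a,b,c\in A$. Put $a\star b=ab-a-b$. A subbrace is a subset which is a subgroup of both $(A,+)$ and $(A,\cdot)$; a subbrace $L$ is an ideal if $a\star z, z\star a\in L$ for all $a\in A$, $z\in L$, and then the quotient brace $A/L$ is defined. $A$ is a T-brace if whenever $I$ is an ideal of $J$ and $J$ is an ideal of $A$, then $I$ is an ideal of $A$. The $\star$-center is $\zeta(\star,A)=\{a: a\star x=x\star a=0\ \forall x\}$; the upper $\star$-central series is $\zeta_0(\star,A)=0$, $\zeta_{n+1}(\star,A)/\zeta_n(\star,A)=\zeta(\star,A/\zeta_n(\star,A))$, each term an ideal of $A$. *)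

theory Defs
  imports Main
begin

text \<open>A (left) brace whose underlying set is the whole type 'a: the addition is the
  abelian group structure of the type class ab_group_add, the multiplication is m.\<close>

definition mgroup :: "('a \<Rightarrow> 'a \<Rightarrow> 'a) \<Rightarrow> bool" where
  "mgroup m \<longleftrightarrow> (\<forall>a b c. m (m a b) c = m a (m b c)) \<and>
     (\<exists>e. (\<forall>a. m e a = a \<and> m a e = a) \<and> (\<forall>a. \<exists>b. m a b = e \<and> m b a = e))"

definition mone :: "('a \<Rightarrow> 'a \<Rightarrow> 'a) \<Rightarrow> 'a" where
  "mone m = (THE e. \<forall>a. m e a = a \<and> m a e = a)"

definition minv :: "('a \<Rightarrow> 'a \<Rightarrow> 'a) \<Rightarrow> 'a \<Rightarrow> 'a" where
  "minv m a = (THE b. m a b = mone m \<and> m b a = mone m)"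

definition brace :: "('a::ab_group_add \<Rightarrow> 'a \<Rightarrow> 'a) \<Rightarrow> bool" where
  "brace m \<longleftrightarrow> mgroup m \<and> (\<forall>a b c. m a (b + c) = m a b + m a c - a)"

definition star :: "('a::ab_group_add \<Rightarrow> 'a \<Rightarrow> 'a) \<Rightarrow> 'a \<Rightarrow> 'a \<Rightarrow> 'a" where
  "star m a b = m a b - a - b"

definition subbrace :: "('a::ab_group_add \<Rightarrow> 'a \<Rightarrow> 'a) \<Rightarrow> 'a set \<Rightarrow> bool" where
  "subbrace m L \<longleftrightarrow>
     0 \<in> L \<and> (\<forall>a\<in>L. \<forall>b\<in>L. a + b \<in> L) \<and> (\<forall>a\<in>L. - a \<in> L) \<and>
     mone m \<in> L \<and> (\<forall>a\<in>L. \<forall>b\<in>L. m a b \<in> L) \<and> (\<forall>a\<in>L. minv m a \<in> L)"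

text \<open>L is an ideal of the subbrace J (J = UNIV: ideal of A).\<close>
definition ideal_of :: "('a::ab_group_add \<Rightarrow> 'a \<Rightarrow> 'a) \<Rightarrow> 'a set \<Rightarrow> 'a set \<Rightarrow> bool" where
  "ideal_of m L J \<longleftrightarrow> subbrace m J \<and> subbrace m L \<and> L \<subseteq> J \<and>
     (\<forall>a\<in>J. \<forall>z\<in>L. star m a z \<in> L \<and> star m z a \<in> L)"

definition tbrace :: "('a::ab_group_add \<Rightarrow> 'a \<Rightarrow> 'a) \<Rightarrow> bool" where
  "tbrace m \<longleftrightarrow> (\<forall>I J. ideal_of m I J \<and> ideal_of m J UNIV \<longrightarrow> ideal_of m I UNIV)"

text \<open>Upper star-central series, with the quotient unfolded: in A/L one has
  (a+L) star (x+L) = (a star x) + L, so zeta_(n+1) is the preimage of the star-center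
  of A/zeta_n.\<close>
fun zeta :: "('a::ab_group_add \<Rightarrow> 'a \<Rightarrow> 'a) \<Rightarrow> nat \<Rightarrow> 'a set" where
  "zeta m 0 = {0}"
| "zeta m (Suc n) = {a. \<forall>x. star m a x \<in> zeta m n \<and> star m x a \<in> zeta m n}"

end

theory Submission
  imports Defs
begin

definition nmul :: "nat \<Rightarrow> 'a::ab_group_add \<Rightarrow> 'a" where
  "nmul k x = (\<Sum>i<k. x)"

lemma nmul_0[simp]: "nmul 0 x = 0" by (simp add: nmul_def)
lemma nmul_Suc[simp]: "nmul (Suc k) x = x + nmul k x" by (simp add: nmul_def)
lemma nmul_add: "nmul (k + l) x = nmul k x + nmul l x"
  by (induction k) (simp_all add: algebra_simps)
lemma nmul_distrib: "nmul k (x + y) = nmul k x + nmul k y"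
  by (induction k) (simp_all add: algebra_simps)
lemma nmul_neg: "nmul k (- x) = - nmul k x"
  by (induction k) (simp_all add: algebra_simps)
lemma nmul_diff: "nmul k (x - y) = nmul k x - nmul k y"
  using nmul_distrib[of k x "-y"] nmul_neg[of k y] by simp
lemma nmul_mult: "nmul (k * l) x = nmul k (nmul l x)"
  by (induction k) (simp_all add: nmul_add)

definition zmul :: "int \<Rightarrow> 'a::ab_group_add \<Rightarrow> 'a" where
  "zmul n x = nmul (nat n) x - nmul (nat (- n)) x"

lemma zmul_rep:
  assumes "n = int p - int q"
  shows "zmul n x = nmul p x - nmul q x"
proof -
  have "p + nat (- n) = nat n + q" using assms by linarith
  then have "nmul p x + nmul (nat (- n)) x = nmul (nat n) x + nmul q x"
    by (metis nmul_add)
  then show ?thesis unfolding zmul_def by (simp add: algebra_simps)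
qed

lemma int_rep: "\<exists>p q. n = int p - int q"
  by (rule exI[of _ "nat n"], rule exI[of _ "nat (- n)"]) simp

lemma zmul_add: "zmul (i + j) x = zmul i x + zmul j x"
proof -
  obtain p q where i: "i = int p - int q" using int_rep by blast
  obtain p' q' where j: "j = int p' - int q'" using int_rep by blast
  have "i + j = int (p + p') - int (q + q')" using i j by simp
  from zmul_rep[OF this] have "zmul (i + j) x = nmul (p + p') x - nmul (q + q') x" .
  then show ?thesis unfolding zmul_rep[OF i] zmul_rep[OF j] nmul_add
    by (simp add: algebra_simps)
qed

lemma zmul_neg: "zmul (- i) x = - zmul i x"
proof -
  obtain p q where i: "i = int p - int q" using int_rep by blast
  have "- i = int q - int p" using i by simp
  from zmul_rep[OF this] have "zmul (- i) x = nmul q x - nmul p x" .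
  then show ?thesis unfolding zmul_rep[OF i] by simp
qed

lemma zmul_distrib: "zmul i (x + y) = zmul i x + zmul i y"
  unfolding zmul_def by (simp add: nmul_distrib algebra_simps)

lemma zmul_negx: "zmul i (- x) = - zmul i x"
  unfolding zmul_def by (simp add: nmul_neg algebra_simps)

lemma zmul_diff: "zmul i (x - y) = zmul i x - zmul i y"
  using zmul_distrib[of i x "- y"] zmul_negx[of i y] by simp

lemma zmul_mult: "zmul (i * j) x = zmul i (zmul j x)"
proof -
  obtain p q where i: "i = int p - int q" using int_rep by blast
  obtain p' q' where j: "j = int p' - int q'" using int_rep by blast
  have "i * j = int (p * p' + q * q') - int (p * q' + q * p')" unfolding i j
    by (simp add: algebra_simps)
  from zmul_rep[OF this] have "zmul (i * j) x = nmul (p * p' + q * q') x - nmul (p * q' + q * p') x" .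
  then show ?thesis unfolding zmul_rep[OF i] zmul_rep[OF j] nmul_add nmul_mult nmul_diff
    by (simp add: nmul_add nmul_mult nmul_diff algebra_simps)
qed

lemma zmul_comm: "zmul i (zmul j x) = zmul j (zmul i x)"
  by (metis mult.commute zmul_mult)

lemma zmul_int: "zmul (int k) x = nmul k x"
  unfolding zmul_def by simp

lemma zmul_0[simp]: "zmul 0 x = 0" unfolding zmul_def by simp
lemma zmul_1[simp]: "zmul 1 x = x" unfolding zmul_def by (simp add: nmul_def)
lemma zmul_x0[simp]: "zmul i 0 = 0" unfolding zmul_def by (simp add: nmul_def)

definition addsub :: "'a::ab_group_add set \<Rightarrow> bool" where
  "addsub S \<longleftrightarrow> 0 \<in> S \<and> (\<forall>a\<in>S. \<forall>b\<in>S. a + b \<in> S) \<and> (\<forall>a\<in>S. - a \<in> S)"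

lemma addsub_0: "addsub S \<Longrightarrow> 0 \<in> S" by (simp add: addsub_def)
lemma addsub_add: "addsub S \<Longrightarrow> a \<in> S \<Longrightarrow> b \<in> S \<Longrightarrow> a + b \<in> S" by (simp add: addsub_def)
lemma addsub_neg: "addsub S \<Longrightarrow> a \<in> S \<Longrightarrow> - a \<in> S" by (simp add: addsub_def)
lemma addsub_diff: "addsub S \<Longrightarrow> a \<in> S \<Longrightarrow> b \<in> S \<Longrightarrow> a - b \<in> S"
  using addsub_add[of S a "-b"] addsub_neg[of S b] by simp
lemma addsub_nmul: "addsub S \<Longrightarrow> a \<in> S \<Longrightarrow> nmul k a \<in> S"
  by (induction k) (simp_all add: addsub_0 addsub_add)
lemma addsub_zmul: "addsub S \<Longrightarrow> a \<in> S \<Longrightarrow> zmul i a \<in> S"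
  unfolding zmul_def by (simp add: addsub_diff addsub_nmul)

lemma approx_hom:
  assumes L: "addsub L" and S: "addsub S"
    and g: "\<And>u v. u \<in> S \<Longrightarrow> v \<in> S \<Longrightarrow> g (u + v) - (g u + g v) \<in> L"
    and u: "u \<in> S"
  shows "g (zmul i u) - zmul i (g u) \<in> L"
proof -
  have g0: "g 0 \<in> L"
  proof -
    have "g (0 + 0) - (g 0 + g 0) \<in> L" using g addsub_0[OF S] by blast
    then have "- g 0 \<in> L" by simp
    then show ?thesis using addsub_neg[OF L] by fastforce
  qed
  have gn: "g (nmul k u) - nmul k (g u) \<in> L" for k
  proof (induction k)
    case 0 then show ?case using g0 by simp
  next
    case (Suc k)
    have "g (u + nmul k u) - (g u + g (nmul k u)) \<in> L"
      using g u addsub_nmul[OF S u] by blast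
    from addsub_add[OF L this Suc] show ?case by (simp add: algebra_simps)
  qed
  have gneg: "g (- v) + g v \<in> L" if "v \<in> S" for v
  proof -
    have "g (v + - v) - (g v + g (- v)) \<in> L" using g that addsub_neg[OF S that] by blast
    then have "g 0 - (g v + g (- v)) \<in> L" by simp
    from addsub_diff[OF L g0 this] show ?thesis by (simp add: algebra_simps)
  qed
  obtain p q where i: "i = int p - int q" using int_rep by blast
  have z: "zmul i u = nmul p u + - nmul q u" "zmul i (g u) = nmul p (g u) - nmul q (g u)"
    using zmul_rep[OF i] by simp_all
  have A: "g (nmul p u + - nmul q u) - (g (nmul p u) + g (- nmul q u)) \<in> L"
    using g addsub_nmul[OF S u] addsub_neg[OF S addsub_nmul[OF S u]] by blast
  have B: "g (- nmul q u) + g (nmul q u) \<in> L" using gneg addsub_nmul[OF S u] by blast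
  have "(g (nmul p u + - nmul q u) - (g (nmul p u) + g (- nmul q u)))
     + (g (nmul p u) - nmul p (g u)) + (g (- nmul q u) + g (nmul q u))
     - (g (nmul q u) - nmul q (g u)) \<in> L"
    by (intro addsub_diff[OF L] addsub_add[OF L] A B gn)
  then show ?thesis unfolding z by (simp add: algebra_simps)
qed


locale br =
  fixes m :: "'a::ab_group_add \<Rightarrow> 'a \<Rightarrow> 'a"
  assumes br: "brace m"
begin

lemma assoc: "m (m a b) c = m a (m b c)"
  using br unfolding brace_def mgroup_def by blast

lemma distr: "m a (b + c) = m a b + m a c - a"
  using br unfolding brace_def by blast

lemma rid[simp]: "m a 0 = a"
  using distr[of a 0 0] by simp

lemma ex_e: "\<exists>e. (\<forall>a. m e a = a \<and> m a e = a) \<and> (\<forall>a. \<exists>b. m a b = e \<and> m b a = e)"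
  using br unfolding brace_def mgroup_def by blast

lemma e_unique: "(\<forall>a. m e a = a \<and> m a e = a) \<Longrightarrow> e = 0"
  by (metis rid)

lemma ex_e0: "(\<forall>a. m 0 a = a \<and> m a 0 = a) \<and> (\<forall>a. \<exists>b. m a b = 0 \<and> m b a = 0)"
proof -
  obtain e where e: "\<forall>a. m e a = a \<and> m a e = a" "\<forall>a. \<exists>b. m a b = e \<and> m b a = e"
    using ex_e by blast
  have "e = 0" using e(1) by (rule e_unique)
  then show ?thesis using e by simp
qed

lemma lid[simp]: "m 0 a = a"
  using ex_e0 by simp

lemma ex_inv: "\<exists>b. m a b = 0 \<and> m b a = 0"
  using ex_e0 by simp

lemma mone_eq: "mone m = 0"
  unfolding mone_def
proof (rule the_equality)
  show "\<forall>a. m 0 a = a \<and> m a 0 = a" by simp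
next
  fix e assume "\<forall>a. m e a = a \<and> m a e = a"
  then show "e = 0" by (rule e_unique)
qed

lemma minv: "m a (minv m a) = 0 \<and> m (minv m a) a = 0"
proof -
  obtain b where b: "m a b = 0 \<and> m b a = 0" using ex_inv by blast
  have uniq: "c = b" if "m a c = 0 \<and> m c a = 0" for c
  proof -
    have "c = m (m b a) c" using b by simp
    also have "\<dots> = m b (m a c)" by (rule assoc)
    finally show ?thesis using that by simp
  qed
  have "m a (THE c. m a c = 0 \<and> m c a = 0) = 0 \<and> m (THE c. m a c = 0 \<and> m c a = 0) a = 0"
    by (rule theI[of _ b]) (rule b, rule uniq)
  then show ?thesis unfolding minv_def mone_eq .
qed

lemma m_eq: "m a b = a + b + star m a b"
  unfolding star_def by simp

lemma star_add2: "star m x (y + z) = star m x y + star m x z"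
  unfolding star_def distr by (simp add: algebra_simps)

lemma star_02[simp]: "star m x 0 = 0" unfolding star_def by simp
lemma star_01[simp]: "star m 0 x = 0" unfolding star_def by simp

lemma star_neg2: "star m x (- y) = - star m x y"
  using star_add2[of x y "-y"] by (simp add: eq_neg_iff_add_eq_0 add.commute)

lemma star_diff2: "star m x (y - z) = star m x y - star m x z"
  using star_add2[of x y "-z"] star_neg2[of x z] by simp

lemma star_mult: "star m (m a b) x = star m a (star m b x) + star m a x + star m b x"
proof -
  have "star m a (star m b x) = star m a (m b x) - star m a b - star m a x"
    unfolding star_def[of m b x] by (simp add: star_diff2)
  then show ?thesis unfolding star_def assoc by (simp add: algebra_simps)
qed

lemma solve: "m a (v + star m (minv m a) v) = a + v"
proof -
  have "star m (m a (minv m a)) v = 0" using minv by simp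
  then have "star m a (star m (minv m a) v) = - star m a v - star m (minv m a) v"
    unfolding star_mult by (simp add: algebra_simps eq_neg_iff_add_eq_0)
  then show ?thesis unfolding m_eq[of a] star_add2 by (simp add: algebra_simps)
qed

lemma addsub_0set: "addsub {0::'a}" unfolding addsub_def by simp
lemma addsub_UNIV: "addsub (UNIV::'a set)" unfolding addsub_def by simp

lemma star_zmul2: "star m x (zmul i y) = zmul i (star m x y)"
  using approx_hom[OF addsub_0set addsub_UNIV, of "star m x" y i] star_add2 by simp

end
definition cen :: "('a::ab_group_add \<Rightarrow> 'a \<Rightarrow> 'a) \<Rightarrow> 'a set \<Rightarrow> 'a set" where
  "cen m L = {a. \<forall>x. star m a x \<in> L \<and> star m x a \<in> L}"

definition isid :: "('a::ab_group_add \<Rightarrow> 'a \<Rightarrow> 'a) \<Rightarrow> 'a set \<Rightarrow> bool" where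
  "isid m L \<longleftrightarrow> addsub L \<and> (\<forall>x. \<forall>l\<in>L. star m x l \<in> L \<and> star m l x \<in> L)"

lemma zeta_Suc': "zeta m (Suc n) = cen m (zeta m n)" by (simp add: cen_def)

lemma cenD1: "a \<in> cen m L \<Longrightarrow> star m a x \<in> L" by (simp add: cen_def)
lemma cenD2: "a \<in> cen m L \<Longrightarrow> star m x a \<in> L" by (simp add: cen_def)
lemma isid_addsub: "isid m L \<Longrightarrow> addsub L" by (simp add: isid_def)
lemma isidD1: "isid m L \<Longrightarrow> l \<in> L \<Longrightarrow> star m x l \<in> L" by (simp add: isid_def)
lemma isidD2: "isid m L \<Longrightarrow> l \<in> L \<Longrightarrow> star m l x \<in> L" by (simp add: isid_def)

context br begin

lemma B0:
  assumes L: "isid m L" and l: "l \<in> L"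
  shows "star m (y + l) x - star m y x \<in> L"
proof -
  let ?u = "minv m y"
  let ?l = "l + star m ?u l"
  have l': "?l \<in> L" using L l by (simp add: isid_def addsub_def)
  have "y + l = m y ?l" by (rule solve[symmetric])
  then have "star m (y + l) x = star m y (star m ?l x) + star m y x + star m ?l x"
    by (simp add: star_mult)
  moreover have "star m y (star m ?l x) + star m ?l x \<in> L"
    using L l' by (meson addsub_add isidD1 isidD2 isid_addsub)
  ultimately show ?thesis by (simp add: algebra_simps)
qed

lemma Bl:
  assumes L: "isid m L" and a: "a \<in> cen m L"
  shows "star m (a + y) x - star m y x \<in> L"
proof -
  let ?b = "y + star m (minv m a) y"
  have e: "m a ?b = a + y" by (rule solve)
  then have s: "star m (a + y) x = star m a (star m ?b x) + star m a x + star m ?b x"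
    by (metis star_mult)
  have "y = ?b + star m a ?b" using e unfolding m_eq[of a] by (simp add: algebra_simps)
  moreover have "star m a ?b \<in> L" using a by (rule cenD1)
  ultimately have d: "star m y x - star m ?b x \<in> L" using B0[OF L] by metis
  have "star m a (star m ?b x) + star m a x \<in> L"
    using a L by (meson addsub_add cenD1 isid_addsub)
  from addsub_diff[OF isid_addsub[OF L] this d] show ?thesis unfolding s
    by (simp add: algebra_simps)
qed

lemma isid_cen:
  assumes L: "isid m L"
  shows "isid m (cen m L)" "L \<subseteq> cen m L"
proof -
  have A: "addsub L" using L by (rule isid_addsub)
  show sub: "L \<subseteq> cen m L" using L unfolding cen_def isid_def by blast
  have "addsub (cen m L)"
    unfolding addsub_def
  proof (intro conjI ballI)
    show "0 \<in> cen m L" using addsub_0[OF A] by (simp add: cen_def)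
  next
    fix a b assume a: "a \<in> cen m L" and b: "b \<in> cen m L"
    show "a + b \<in> cen m L" unfolding cen_def
    proof (intro CollectI allI conjI)
      fix x
      show "star m x (a + b) \<in> L" unfolding star_add2
        using a b A by (meson addsub_add cenD2)
      have "star m (a + b) x - star m b x \<in> L" by (rule Bl[OF L a])
      from addsub_add[OF A this cenD1[OF b, of x]] show "star m (a + b) x \<in> L" by simp
    qed
  next
    fix a assume a: "a \<in> cen m L"
    show "- a \<in> cen m L" unfolding cen_def
    proof (intro CollectI allI conjI)
      fix x
      show "star m x (- a) \<in> L" unfolding star_neg2
        using a A by (meson addsub_neg cenD2)
      have "star m (a + - a) x - star m (- a) x \<in> L" by (rule Bl[OF L a])
      from addsub_neg[OF A this] show "star m (- a) x \<in> L" by simp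
    qed
  qed
  moreover have "\<forall>x. \<forall>l\<in>cen m L. star m x l \<in> cen m L \<and> star m l x \<in> cen m L"
    using sub by (meson cenD1 cenD2 subsetD)
  ultimately show "isid m (cen m L)" by (simp add: isid_def)
qed

lemma Cl:
  assumes L: "isid m L" and u: "u \<in> cen m (cen m L)" and v: "v \<in> cen m (cen m L)"
  shows "star m (u + v) x - (star m u x + star m v x) \<in> L"
proof -
  have A: "addsub L" using L by (rule isid_addsub)
  have Z: "isid m (cen m L)" "L \<subseteq> cen m L" using isid_cen[OF L] by auto
  let ?b = "v + star m (minv m u) v"
  have e: "m u ?b = u + v" by (rule solve)
  then have s: "star m (u + v) x = star m u (star m ?b x) + star m u x + star m ?b x"
    by (metis star_mult)
  have "v = star m u ?b + ?b" using e unfolding m_eq[of u] by (simp add: algebra_simps)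
  moreover have z: "star m u ?b \<in> cen m L" using u by (rule cenD1)
  ultimately have d: "star m v x - star m ?b x \<in> L" using Bl[OF L z] by metis
  have "star m v x - (star m v x - star m ?b x) \<in> cen m L"
    using addsub_diff[OF isid_addsub[OF Z(1)] cenD1[OF v]] d Z(2) by blast
  then have "star m ?b x \<in> cen m L" by simp
  then have "star m u (star m ?b x) \<in> L" by (rule cenD2)
  from addsub_diff[OF A this d] show ?thesis unfolding s
    by (simp add: algebra_simps)
qed

lemma zeta_isid: "isid m (zeta m n)"
proof (induction n)
  case 0 then show ?case by (simp add: isid_def addsub_def)
next
  case (Suc n) then show ?case unfolding zeta_Suc' by (rule isid_cen)
qed

lemma subbrace_UNIV: "subbrace m UNIV" by (simp add: subbrace_def)

lemma ideal_intro:
  assumes T: "subbrace m T" and S: "addsub S" and ST: "S \<subseteq> T"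
    and st: "\<And>t s. t \<in> T \<Longrightarrow> s \<in> S \<Longrightarrow> star m t s \<in> S \<and> star m s t \<in> S"
  shows "ideal_of m S T"
proof -
  have c1: "0 \<in> S" using S by (rule addsub_0)
  have c2: "mone m \<in> S" unfolding mone_eq by (rule c1)
  have c3: "\<forall>a\<in>S. \<forall>b\<in>S. a + b \<in> S" using S by (simp add: addsub_def)
  have c4: "\<forall>a\<in>S. - a \<in> S" using S by (simp add: addsub_def)
  have c5: "\<forall>a\<in>S. \<forall>b\<in>S. m a b \<in> S"
  proof (intro ballI)
    fix a b assume a: "a \<in> S" and b: "b \<in> S"
    have aT: "a \<in> T" using a ST by (rule subsetD[rotated])
    have "star m a b \<in> S" using st[OF aT b] by (rule conjunct1)
    then have "a + b + star m a b \<in> S" using c3 a b by blast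
    then show "m a b \<in> S" by (simp only: m_eq[of a b])
  qed
  have c6: "\<forall>a\<in>S. minv m a \<in> S"
  proof
    fix a assume a: "a \<in> S"
    have aT: "a \<in> T" using a ST by (rule subsetD[rotated])
    have "\<forall>a\<in>T. minv m a \<in> T" using T by (simp add: subbrace_def)
    then have uT: "minv m a \<in> T" using aT by blast
    have "m (minv m a) a = 0" using minv by blast
    then have "minv m a + (a + star m (minv m a) a) = 0" unfolding m_eq[of "minv m a" a]
      by (simp add: add.assoc)
    then have e: "minv m a = - (a + star m (minv m a) a)"
      by (rule add_eq_0_iff2[THEN iffD1])
    have "star m (minv m a) a \<in> S" using st[OF uT a] by (rule conjunct1)
    then have "a + star m (minv m a) a \<in> S" using c3 a by blast
    then have f: "- (a + star m (minv m a) a) \<in> S" using c4 by blast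
    show "minv m a \<in> S" using f by (simp only: e[symmetric])
  qed
  have "subbrace m S" unfolding subbrace_def using c1 c2 c3 c4 c5 c6 by blast
  moreover have "\<forall>a\<in>T. \<forall>z\<in>S. star m a z \<in> S \<and> star m z a \<in> S" using st by blast
  ultimately show ?thesis unfolding ideal_of_def using T ST by blast
qed

end

context br begin

lemma main:
  assumes T: "tbrace m" and L: "isid m L" and a: "a \<in> cen m (cen m L)"
  shows "\<exists>k>0. nmul k a \<in> cen m L"
proof (rule ccontr)
  assume H: "\<not> (\<exists>k>0. nmul k a \<in> cen m L)"
  define Z1 where "Z1 = cen m L"
  define Z2 where "Z2 = cen m Z1"
  have Z1: "isid m Z1" and LZ1: "L \<subseteq> Z1" unfolding Z1_def using isid_cen[OF L] by auto
  have Z2: "isid m Z2" and Z12: "Z1 \<subseteq> Z2" unfolding Z2_def using isid_cen[OF Z1] by auto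
  have A: "addsub L" using L by (rule isid_addsub)
  have A1: "addsub Z1" using Z1 by (rule isid_addsub)
  have A2: "addsub Z2" using Z2 by (rule isid_addsub)
  have aZ2: "a \<in> Z2" using a by (simp add: Z2_def Z1_def)
  define b where "b = a + a"
  have bZ2: "b \<in> Z2" unfolding b_def by (rule addsub_add[OF A2 aZ2 aZ2])
  define d where "d = star m b b"
  have dZ1: "d \<in> Z1" unfolding d_def using bZ2 unfolding Z2_def by (rule cenD1)
  have H': "zmul i b \<notin> Z1" if "i \<noteq> 0" for i
  proof
    assume z: "zmul i b \<in> Z1"
    have e: "zmul i b = zmul (i + i) a" unfolding b_def zmul_distrib zmul_add ..
    have "zmul \<bar>i + i\<bar> a \<in> Z1"
    proof (cases "i + i \<ge> 0")
      case True then show ?thesis using z e by simp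
    next
      case False
      then have "\<bar>i + i\<bar> = - (i + i)" by simp
      then show ?thesis using addsub_neg[OF A1 z] e by (simp add: zmul_neg)
    qed
    moreover have "zmul \<bar>i + i\<bar> a = nmul (nat \<bar>i + i\<bar>) a"
      using zmul_int[of "nat \<bar>i + i\<bar>" a] by simp
    moreover have "nat \<bar>i + i\<bar> > 0" using that by simp
    ultimately show False using H unfolding Z1_def by metis
  qed
  have ghom: "star m (zmul i u) x - zmul i (star m u x) \<in> L" if "u \<in> Z2" for i u x
    using approx_hom[OF A A2, of "\<lambda>u. star m u x", OF _ that] Cl[OF L] unfolding Z2_def Z1_def
    by blast
  have keyb: "star m (z + zmul n b) b - zmul n d \<in> L" if "z \<in> Z1" for z n
  proof -
    have "star m (z + zmul n b) b - star m (zmul n b) b \<in> L"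
      using Bl[OF L] that unfolding Z1_def by blast
    moreover have "star m (zmul n b) b - zmul n d \<in> L" unfolding d_def using ghom bZ2 by blast
    ultimately show ?thesis using addsub_add[OF A] by fastforce
  qed
  define J where "J = {zmul n b + z | n z. z \<in> Z1}"
  define I where "I = {zmul n b + zmul l d + w | n l w. w \<in> L}"
  have JZ2: "J \<subseteq> Z2"
  proof
    fix j assume "j \<in> J"
    then obtain n z where j: "j = zmul n b + z" "z \<in> Z1" unfolding J_def by blast
    show "j \<in> Z2" unfolding j using addsub_add[OF A2 addsub_zmul[OF A2 bZ2]] j(2) Z12 by blast
  qed
  have Z1J: "Z1 \<subseteq> J"
  proof
    fix z assume "z \<in> Z1"
    then have "zmul 0 b + z \<in> J" unfolding J_def by blast
    then show "z \<in> J" by simp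
  qed
  have addJ: "addsub J" unfolding addsub_def
  proof (intro conjI ballI)
    show "0 \<in> J" using Z1J addsub_0[OF A1] by blast
  next
    fix x y assume "x \<in> J" "y \<in> J"
    then obtain n z n' z' where x: "x = zmul n b + z" "z \<in> Z1" and y: "y = zmul n' b + z'" "z' \<in> Z1"
      unfolding J_def by blast
    have "x + y = zmul (n + n') b + (z + z')" unfolding x y zmul_add by (simp add: algebra_simps)
    moreover have "z + z' \<in> Z1" using addsub_add[OF A1 x(2) y(2)] .
    ultimately show "x + y \<in> J" unfolding J_def by blast
  next
    fix x assume "x \<in> J"
    then obtain n z where x: "x = zmul n b + z" "z \<in> Z1" unfolding J_def by blast
    have "- x = zmul (- n) b + (- z)" unfolding x zmul_neg by simp
    moreover have "- z \<in> Z1" using addsub_neg[OF A1 x(2)] .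
    ultimately show "- x \<in> J" unfolding J_def by blast
  qed
  have addI: "addsub I" unfolding addsub_def
  proof (intro conjI ballI)
    have "zmul 0 b + zmul 0 d + 0 \<in> I" unfolding I_def using addsub_0[OF A] by blast
    then show "0 \<in> I" by simp
  next
    fix x y assume "x \<in> I" "y \<in> I"
    then obtain n l w n' l' w' where x: "x = zmul n b + zmul l d + w" "w \<in> L"
      and y: "y = zmul n' b + zmul l' d + w'" "w' \<in> L"
      unfolding I_def by blast
    have "x + y = zmul (n + n') b + zmul (l + l') d + (w + w')" unfolding x y zmul_add
      by (simp add: algebra_simps)
    moreover have "w + w' \<in> L" using addsub_add[OF A x(2) y(2)] .
    ultimately show "x + y \<in> I" unfolding I_def by blast
  next
    fix x assume "x \<in> I"
    then obtain n l w where x: "x = zmul n b + zmul l d + w" "w \<in> L" unfolding I_def by blast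
    have "- x = zmul (- n) b + zmul (- l) d + (- w)" unfolding x zmul_neg by simp
    moreover have "- w \<in> L" using addsub_neg[OF A x(2)] .
    ultimately show "- x \<in> I" unfolding I_def by blast
  qed
  have IJ: "I \<subseteq> J"
  proof
    fix x assume "x \<in> I"
    then obtain n l w where x: "x = zmul n b + zmul l d + w" "w \<in> L" unfolding I_def by blast
    have "zmul l d + w \<in> Z1" using addsub_add[OF A1 addsub_zmul[OF A1 dZ1]] x(2) LZ1 by blast
    moreover have "x = zmul n b + (zmul l d + w)" unfolding x by (simp add: add.assoc)
    ultimately show "x \<in> J" unfolding J_def by blast
  qed
  have idJ: "ideal_of m J UNIV"
  proof (rule ideal_intro[OF subbrace_UNIV addJ])
    show "J \<subseteq> UNIV" by simp
    fix t s assume "s \<in> J"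
    then have "s \<in> Z2" using JZ2 by blast
    then have "star m t s \<in> Z1" "star m s t \<in> Z1" unfolding Z2_def by (auto intro: cenD1 cenD2)
    then show "star m t s \<in> J \<and> star m s t \<in> J" using Z1J by blast
  qed
  have sbJ: "subbrace m J" using idJ unfolding ideal_of_def by blast
  have idI: "ideal_of m I J"
  proof (rule ideal_intro[OF sbJ addI IJ])
    fix t s assume t: "t \<in> J" and s: "s \<in> I"
    obtain n z where tt: "t = zmul n b + z" "z \<in> Z1" using t unfolding J_def by blast
    obtain p l w where ss: "s = zmul p b + zmul l d + w" "w \<in> L" using s unfolding I_def by blast
    have t1: "star m t b - zmul n d \<in> L"
      using keyb[OF tt(2), of n] unfolding tt by (simp add: add.commute)
    have zs: "zmul l d + w \<in> Z1" using addsub_add[OF A1 addsub_zmul[OF A1 dZ1]] ss(2) LZ1 by blast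
    have s1: "star m s b - zmul p d \<in> L"
      using keyb[OF zs, of p] unfolding ss by (simp add: add.commute add.left_commute)
    define w1 where "w1 = star m t b - zmul n d"
    define w2 where "w2 = star m s b - zmul p d"
    have "star m t s = zmul p (star m t b) + zmul l (star m t d) + star m t w"
      unfolding ss star_add2 star_zmul2 ..
    also have "\<dots> = zmul 0 b + zmul (p * n) d + (zmul p w1 + zmul l (star m t d) + star m t w)"
      unfolding w1_def zmul_mult by (simp add: zmul_distrib zmul_negx zmul_diff algebra_simps)
    finally have e1: "star m t s = \<dots>" .
    have "zmul p w1 + zmul l (star m t d) + star m t w \<in> L"
      using A t1 ss(2) cenD2[OF dZ1[unfolded Z1_def], of t] isidD1[OF L ss(2), of t]
      unfolding w1_def by (meson addsub_add addsub_zmul)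
    then have r1: "star m t s \<in> I" unfolding e1 I_def by blast
    have "star m s t = zmul n (star m s b) + star m s z"
      unfolding tt star_add2 star_zmul2 ..
    also have "\<dots> = zmul 0 b + zmul (n * p) d + (zmul n w2 + star m s z)"
      unfolding w2_def zmul_mult by (simp add: zmul_distrib zmul_negx zmul_diff algebra_simps)
    finally have e2: "star m s t = \<dots>" .
    have "zmul n w2 + star m s z \<in> L"
      using A s1 cenD2[OF tt(2)[unfolded Z1_def], of s]
      unfolding w2_def by (meson addsub_add addsub_zmul)
    then have r2: "star m s t \<in> I" unfolding e2 I_def by blast
    show "star m t s \<in> I \<and> star m s t \<in> I" using r1 r2 by blast
  qed
  have idIU: "ideal_of m I UNIV" using T idI idJ unfolding tbrace_def by blast
  have stI: "star m x z \<in> I" "star m z x \<in> I" if "z \<in> I" for x z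
    using idIU that unfolding ideal_of_def by blast+
  have bI: "b \<in> I"
  proof -
    have "zmul 1 b + zmul 0 d + 0 \<in> I" unfolding I_def using addsub_0[OF A] by blast
    then show ?thesis by simp
  qed
  have K: "\<exists>l w. w \<in> L \<and> i = zmul l d + w" if iI: "i \<in> I" and iZ: "i \<in> Z1" for i
  proof -
    obtain n l w where ii: "i = zmul n b + zmul l d + w" "w \<in> L" using iI unfolding I_def by blast
    have "zmul l d + w \<in> Z1" using addsub_add[OF A1 addsub_zmul[OF A1 dZ1]] ii(2) LZ1 by blast
    then have "i - (zmul l d + w) \<in> Z1" using addsub_diff[OF A1 iZ] by blast
    then have "zmul n b \<in> Z1" unfolding ii by (simp add: algebra_simps)
    then have "n = 0" using H' by blast
    then show ?thesis using ii by auto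
  qed
  define e where "e = star m a b"
  have eZ1: "e \<in> Z1" unfolding e_def using bZ2 unfolding Z2_def by (rule cenD2)
  obtain l0 w0 where e0: "w0 \<in> L" "e = zmul l0 d + w0" using K[OF stI(1)[OF bI] eZ1[unfolded e_def]]
    unfolding e_def by blast
  have d2: "d - (e + e) \<in> L"
    using Cl[OF L a a, of b] unfolding d_def e_def b_def by simp
  define t where "t = 1 - 2 * l0"
  have t0: "t \<noteq> 0" unfolding t_def by presburger
  have "zmul t e = e - zmul l0 (e + e)"
  proof -
    have "t = 1 + (- l0) + (- l0)" unfolding t_def by simp
    then have "zmul t e = zmul 1 e + zmul (- l0) e + zmul (- l0) e"
      by (simp only: zmul_add)
    then show ?thesis by (simp add: zmul_neg zmul_distrib)
  qed
  also have "\<dots> = w0 + zmul l0 (d - (e + e))"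
    using e0(2) by (simp add: zmul_distrib zmul_negx zmul_diff algebra_simps)
  finally have te: "zmul t e \<in> L"
    using addsub_add[OF A e0(1) addsub_zmul[OF A d2]] by simp
  have "zmul t d = zmul t (d - (e + e)) + zmul t e + zmul t e"
    by (simp add: zmul_distrib zmul_diff)
  then have td: "zmul t d \<in> L"
    using addsub_add[OF A addsub_add[OF A addsub_zmul[OF A d2] te] te] by simp
  have tI: "zmul t i \<in> L" if iI: "i \<in> I" and iZ: "i \<in> Z1" for i
  proof -
    obtain l w where lw: "w \<in> L" "i = zmul l d + w" using K[OF iI iZ] by blast
    have "zmul t i = zmul l (zmul t d) + zmul t w" unfolding lw zmul_distrib zmul_comm[of t l] ..
    then show ?thesis using addsub_add[OF A addsub_zmul[OF A td] addsub_zmul[OF A lw(1)]] by simp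
  qed
  have "zmul t b \<in> Z1" unfolding Z1_def cen_def
  proof (intro CollectI allI conjI)
    fix x
    have "star m x b \<in> Z1" using bZ2 unfolding Z2_def by (rule cenD2)
    then show "star m x (zmul t b) \<in> L" unfolding star_zmul2 using tI stI(1)[OF bI] by blast
    have "star m b x \<in> Z1" using bZ2 unfolding Z2_def by (rule cenD1)
    then have "zmul t (star m b x) \<in> L" using tI stI(2)[OF bI] by blast
    moreover have "star m (zmul t b) x - zmul t (star m b x) \<in> L" using ghom bZ2 by blast
    ultimately show "star m (zmul t b) x \<in> L" using addsub_add[OF A] by fastforce
  qed
  then show False using H' t0 by blast
qed

end

theorem proposition4p2:
  fixes m :: "'a::ab_group_add \<Rightarrow> 'a \<Rightarrow> 'a"
  assumes "brace m" and "tbrace m"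
  shows "\<forall>n. \<forall>a \<in> zeta m n. \<exists>k::nat. k > 0 \<and> (\<Sum>i<k. a) \<in> zeta m 1"
proof -
  interpret br m by unfold_locales (rule assms(1))
  have P: "\<forall>a \<in> zeta m (Suc n). \<exists>k>0. nmul k a \<in> zeta m 1" for n
  proof (induction n)
    case 0
    show ?case
    proof
      fix a assume "a \<in> zeta m (Suc 0)"
      then have "nmul 1 a \<in> zeta m 1" by (simp add: nmul_def)
      then show "\<exists>k>0. nmul k a \<in> zeta m 1" by blast
    qed
  next
    case (Suc n)
    show ?case
    proof
      fix a assume "a \<in> zeta m (Suc (Suc n))"
      then have "a \<in> cen m (cen m (zeta m n))" unfolding zeta_Suc' .
      from main[OF assms(2) zeta_isid this] obtain k where k: "k > 0" "nmul k a \<in> zeta m (Suc n)"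
        unfolding zeta_Suc' by blast
      from Suc k(2) obtain k' where k': "k' > 0" "nmul k' (nmul k a) \<in> zeta m 1" by blast
      have "nmul (k' * k) a \<in> zeta m 1" using k' unfolding nmul_mult by simp
      moreover have "k' * k > 0" using k k' by simp
      ultimately show "\<exists>k>0. nmul k a \<in> zeta m 1" by blast
    qed
  qed
  show ?thesis
  proof (intro allI ballI)
    fix n a assume a: "a \<in> zeta m n"
    have "\<exists>k>0. nmul k a \<in> zeta m 1"
    proof (cases n)
      case 0
      then have "a = 0" using a by simp
      moreover have "(0::'a) \<in> zeta m 1" using addsub_0[OF isid_addsub[OF zeta_isid]] .
      ultimately have "nmul 1 a \<in> zeta m 1" by (simp add: nmul_def)
      then show ?thesis by blast
    next
      case (Suc n')
      then show ?thesis using P a by blast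
    qed
    then show "\<exists>k::nat. k > 0 \<and> (\<Sum>i<k. a) \<in> zeta m 1" unfolding nmul_def by blast
  qed
qed

end
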